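(* Let $A$ be a finite-dimensional alternative algebra over a field of characteristic different from $2$ such that every linear endomorphism of $A$ is a quasiderivation, i.e. $QDer(A)=End(A)$. Then either $A$ is a field or $A$ has zero multiplication.
   Context: An algebra is alternative if $(x,x,y)=(x,y,y)=0$ identically, where $(x,y,z)=(xy)z-x(yz)$. A linear map $f:A\to A$ is a quasiderivation if there exists a linear map $Q:A\to A$ with $Q(xy)=f(x)y+xf(y)$ for all $x,y\in A$; $QDer(A)$ is the set of quasiderivations and $End(A)$ the set of all linear endomorphisms of $A$. *)

theory Defs
  imports Complex_Main
begin

definition bilinear_prod :: "('f::field \<Rightarrow> 'v::ab_group_add \<Rightarrow> 'v) \<Rightarrow> ('v \<Rightarrow> 'v \<Rightarrow> 'v) \<Rightarrow> bool" where
  "bilinear_prod scale mult \<longleftrightarrow>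
     (\<forall>x. Vector_Spaces.linear scale scale (mult x)) \<and> (\<forall>y. Vector_Spaces.linear scale scale (\<lambda>x. mult x y))"

definition associator :: "('v \<Rightarrow> 'v \<Rightarrow> 'v::ab_group_add) \<Rightarrow> 'v \<Rightarrow> 'v \<Rightarrow> 'v \<Rightarrow> 'v" where
  "associator mult x y z = mult (mult x y) z - mult x (mult y z)"

definition alternative_alg :: "('v \<Rightarrow> 'v \<Rightarrow> 'v::ab_group_add) \<Rightarrow> bool" where
  "alternative_alg mult \<longleftrightarrow>
     (\<forall>x y. associator mult x x y = 0 \<and> associator mult x y y = 0)"

definition quasiderivation :: "('f::field \<Rightarrow> 'v::ab_group_add \<Rightarrow> 'v) \<Rightarrow> ('v \<Rightarrow> 'v \<Rightarrow> 'v) \<Rightarrow> ('v \<Rightarrow> 'v) \<Rightarrow> bool" where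
  "quasiderivation scale mult f \<longleftrightarrow> Vector_Spaces.linear scale scale f \<and>
     (\<exists>Q. Vector_Spaces.linear scale scale Q \<and> (\<forall>x y. Q (mult x y) = mult (f x) y + mult x (f y)))"

definition is_field_alg :: "('v \<Rightarrow> 'v \<Rightarrow> 'v::ab_group_add) \<Rightarrow> bool" where
  "is_field_alg mult \<longleftrightarrow>
     (\<forall>x y. mult x y = mult y x) \<and>
     (\<forall>x y z. mult (mult x y) z = mult x (mult y z)) \<and>
     (\<exists>e. e \<noteq> 0 \<and> (\<forall>x. mult e x = x) \<and> (\<forall>x. x \<noteq> 0 \<longrightarrow> (\<exists>y. mult x y = e)))"

end

theory Submission
  imports Defs
begin


lemma lin_mh: "Vector_Spaces.linear s s f \<Longrightarrow> module_hom s s f"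
  by (simp add: module_hom_iff_linear)

locale qalg = vector_space scale
  for scale :: "'f::field \<Rightarrow> 'v::ab_group_add \<Rightarrow> 'v" (infixr \<open>*s\<close> 75) +
  fixes mult :: "'v \<Rightarrow> 'v \<Rightarrow> 'v"
  assumes bil: "bilinear_prod scale mult"
    and alt: "alternative_alg mult"
    and qd: "\<forall>f. Vector_Spaces.linear scale scale f \<longrightarrow> quasiderivation scale mult f"
    and two: "(2::'f) \<noteq> 0"
begin

lemma linR: "module_hom scale scale (mult x)"
  using bil unfolding bilinear_prod_def by (simp add: lin_mh)
lemma linL: "module_hom scale scale (\<lambda>x. mult x y)"
  using bil unfolding bilinear_prod_def by (simp add: lin_mh)

lemma mR_add: "mult x (y + z) = mult x y + mult x z" using module_hom.add[OF linR] .
lemma mR_scale: "mult x (c *s y) = c *s mult x y" using module_hom.scale[OF linR] .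
lemma mR_0[simp]: "mult x 0 = 0" using module_hom.zero[OF linR] .
lemma mR_diff: "mult x (y - z) = mult x y - mult x z" using module_hom.diff[OF linR] .
lemma mL_add: "mult (x + y) z = mult x z + mult y z" using module_hom.add[OF linL] .
lemma mL_scale: "mult (c *s x) y = c *s mult x y" using module_hom.scale[OF linL] .
lemma mL_0[simp]: "mult 0 y = 0" using module_hom.zero[OF linL] .
lemma mL_diff: "mult (x - y) z = mult x z - mult y z" using module_hom.diff[OF linL] .

lemma alt1: "mult (mult x x) y = mult x (mult x y)"
  using alt unfolding alternative_alg_def associator_def by (metis eq_iff_diff_eq_0)
lemma alt2: "mult (mult x y) y = mult x (mult y y)"
  using alt unfolding alternative_alg_def associator_def by (metis eq_iff_diff_eq_0)

lemma getQ: assumes "Vector_Spaces.linear scale scale f"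
  obtains Q where "module_hom scale scale Q" "\<And>x y. Q (mult x y) = mult (f x) y + mult x (f y)"
  using qd assms unfolding quasiderivation_def by (metis lin_mh)

lemma K0: assumes "Vector_Spaces.linear scale scale f" "mult x y = 0"
  shows "mult (f x) y + mult x (f y) = 0"
proof -
  obtain Q where "module_hom scale scale Q" "\<And>x y. Q (mult x y) = mult (f x) y + mult x (f y)"
    using getQ assms(1) by blast
  then show ?thesis using assms(2) module_hom.zero by metis
qed

lemma K1: assumes "Vector_Spaces.linear scale scale f" "mult x y = mult u v"
  shows "mult (f x) y + mult x (f y) = mult (f u) v + mult u (f v)"
proof -
  obtain Q where "module_hom scale scale Q" "\<And>x y. Q (mult x y) = mult (f x) y + mult x (f y)"
    using getQ assms(1) by blast
  then show ?thesis using assms(2) by metis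
qed

lemma lin_sub: "Vector_Spaces.linear scale scale f \<Longrightarrow> Vector_Spaces.linear scale scale g
   \<Longrightarrow> Vector_Spaces.linear scale scale (\<lambda>x. f x - g x)"
proof -
  interpret p: vector_space_pair scale scale by unfold_locales
  show "Vector_Spaces.linear scale scale f \<Longrightarrow> Vector_Spaces.linear scale scale g
   \<Longrightarrow> Vector_Spaces.linear scale scale (\<lambda>x. f x - g x)" using p.linear_compose_sub by blast
qed

lemma extT: assumes "w \<notin> span S"
  shows "\<exists>g. Vector_Spaces.linear scale scale g \<and> (\<forall>s\<in>S. g s = 0) \<and> g w = u"
proof -
  interpret p: vector_space_pair scale scale by unfold_locales
  obtain B where B: "B \<subseteq> S" "independent B" "S \<subseteq> span B"
    using maximal_independent_subset[of S] by blast
  have "span S = span B" using B span_eq by (meson span_superset subset_trans)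
  then have wB: "w \<notin> span B" using assms by simp
  then have "w \<notin> B" using span_superset by blast
  have "independent (insert w B)" using independent_insertI[OF wB B(2)] .
  then obtain g where g: "Vector_Spaces.linear scale scale g"
     "\<forall>x\<in>insert w B. g x = (\<lambda>x. if x = w then u else 0) x"
    using p.linear_independent_extend[of "insert w B" "\<lambda>x. if x = w then u else 0"] by auto
  have "\<forall>s\<in>S. g s = 0"
  proof
    fix s assume "s \<in> S"
    then have "s \<in> span B" using B by blast
    moreover have "\<And>x. x \<in> B \<Longrightarrow> g x = 0" using g(2) \<open>w \<notin> B\<close> by auto
    ultimately show "g s = 0" using p.linear_eq_0_on_span[OF g(1)] by blast
  qed
  then show ?thesis using g by auto
qed

lemma step1: assumes sq: "\<forall>x. mult x x = 0" shows "mult x y = 0"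
proof (rule ccontr)
  define z where "z = mult x y"
  assume nz: "mult x y \<noteq> 0"
  have z1: "mult x z = 0" using alt1[of x y] sq unfolding z_def by simp
  have z2: "mult z y = 0" using alt2[of x y] sq unfolding z_def by simp
  show False
  proof (cases "z \<in> span {x}")
    case True
    then obtain c where c: "z = c *s x" using span_singleton by auto
    have "mult z y = c *s z" using c mL_scale z_def by simp
    then have "c = 0" using z2 nz z_def by simp
    then show False using c nz z_def by simp
  next
    case False
    then obtain g where g: "Vector_Spaces.linear scale scale g" "g x = 0" "g z = y"
      using extT[of z "{x}" y] by auto
    have "mult (g x) z + mult x (g z) = 0" using K0[OF g(1) z1] .
    then show False using g nz z_def by simp
  qed
qed

lemma dbl: "x + x = (2::'f) *s x"
  by (metis one_add_one scale_left_distrib scale_one)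

lemma dbl0: assumes "x + x = (0::'v)" shows "x = 0"
proof -
  have "(2::'f) *s x = 0" using assms dbl[of x] by simp
  then show ?thesis using two by simp
qed

lemma step2a: assumes nz: "mult a a \<noteq> 0" shows "mult a a \<in> span {a}"
proof (rule ccontr)
  define b where "b = mult a a"
  assume nb: "mult a a \<notin> span {a}"
  then have nbs: "b \<notin> span {a}" using b_def by simp
  have bnz: "b \<noteq> 0" using nz b_def by simp
  have anz: "a \<noteq> 0" using nz by auto
  have flex: "mult b a = mult a b" using alt1[of a a] b_def by simp
  have rel: "mult b b = mult a (mult a b)" using alt1[of a b] b_def by simp
  have key: "mult a b + mult a b = mult a (g (mult a b))"
    if g: "Vector_Spaces.linear scale scale g" "g a = 0" "g b = a" for g
    using K1[OF g(1) rel] g flex b_def by simp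
  obtain g where g: "Vector_Spaces.linear scale scale g" "g a = 0" "g b = a"
    using extT[of b "{a}" a] nbs by auto
  have abnz: "mult a b \<noteq> 0"
  proof
    assume "mult a b = 0"
    from K0[OF g(1) this] g show False using bnz b_def by simp
  qed
  show False
  proof (cases "mult a b \<in> span (insert a {b})")
    case True
    then obtain k where "mult a b - k *s a \<in> span {b}" using span_breakdown_eq by blast
    then obtain c where "mult a b - k *s a = c *s b" using span_singleton by auto
    then have ab: "mult a b = k *s a + c *s b" by (metis diff_eq_eq add.commute)
    have "g (mult a b) = c *s a" using ab g module_hom.add[OF lin_mh[OF g(1)]]
      module_hom.scale[OF lin_mh[OF g(1)]] by simp
    then have "mult a b + mult a b = c *s b" using key[OF g] mR_scale b_def by simp
    then have "(k *s a + c *s b) + (k *s a + c *s b) = c *s b" using ab by simp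
    then have e0: "(c *s b + c *s b) + (k *s a + k *s a) = c *s b"
      by (simp add: algebra_simps)
    have e1: "k *s a + k *s a = ((2::'f) * k) *s a" using dbl[of "k *s a"] by (simp add: scale_scale)
    from e0 have "c *s b + (c *s b + (k *s a + k *s a)) = c *s b + 0" by (simp only: add.assoc add_0_right)
    then have "c *s b + (k *s a + k *s a) = 0" by (simp only: add_left_cancel)
    then have e: "((2::'f) * k) *s a + c *s b = 0" using e1 by (simp only: add.commute)
    show False
    proof (cases "c = 0")
      case True
      then have "k = 0" using e two anz by simp
      then show False using ab True abnz by simp
    next
      case False
      have "c *s b = - (((2::'f) * k) *s a)" using e by (simp add: eq_neg_iff_add_eq_0 add.commute)
      have "b = (inverse c * c) *s b" using False by simp
      also have "\<dots> = inverse c *s (c *s b)" by (simp add: scale_scale)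
      also have "\<dots> = (inverse c * (- ((2::'f) * k))) *s a"
        using \<open>c *s b = _\<close> by (simp add: scale_scale)
      finally have "b = (inverse c * (- ((2::'f) * k))) *s a" .
      then have "b \<in> range (\<lambda>k. k *s a)" by blast
      then show False using nbs span_singleton by auto
    qed
  next
    case False
    then obtain h where h: "Vector_Spaces.linear scale scale h" "\<forall>s\<in>{a,b}. h s = 0"
       "h (mult a b) = g (mult a b)"
      using extT[of "mult a b" "insert a {b}" "g (mult a b)"] by auto
    define g' where "g' = (\<lambda>x. g x - h x)"
    have g': "Vector_Spaces.linear scale scale g'" "g' a = 0" "g' b = a"
      using lin_sub[OF g(1) h(1)] g h unfolding g'_def by auto
    have "g' (mult a b) = 0" using h unfolding g'_def by simp
    then have "mult a b + mult a b = 0" using key[OF g'] by simp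
    then show False using dbl0 abnz by blast
  qed
qed

lemma identL: assumes ee: "mult e e = e" and enz: "e \<noteq> 0" shows "mult e y = y"
proof (rule ccontr)
  define z where "z = y - mult e y"
  assume "mult e y \<noteq> y"
  then have znz: "z \<noteq> 0" unfolding z_def by simp
  have ez: "mult e z = 0" unfolding z_def using alt1[of e y] ee by (simp add: mR_diff)
  show False
  proof (cases "z \<in> span {e}")
    case True
    then obtain c where c: "z = c *s e" using span_singleton by auto
    then have "c *s e = 0" using ez ee mR_scale by simp
    then show False using c znz by simp
  next
    case False
    then obtain g where g: "Vector_Spaces.linear scale scale g" "g e = 0" "g z = e"
      using extT[of z "{e}" e] by auto
    from K0[OF g(1) ez] g ee enz show False by simp
  qed
qed

lemma identR: assumes ee: "mult e e = e" and enz: "e \<noteq> 0" shows "mult y e = y"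
proof (rule ccontr)
  define z where "z = y - mult y e"
  assume "mult y e \<noteq> y"
  then have znz: "z \<noteq> 0" unfolding z_def by simp
  have ez: "mult z e = 0" unfolding z_def using alt2[of y e] ee by (simp add: mL_diff)
  show False
  proof (cases "z \<in> span {e}")
    case True
    then obtain c where c: "z = c *s e" using span_singleton by auto
    then have "c *s e = 0" using ez ee mL_scale by simp
    then show False using c znz by simp
  next
    case False
    then obtain g where g: "Vector_Spaces.linear scale scale g" "g e = 0" "g z = e"
      using extT[of z "{e}" e] by auto
    from K0[OF g(1) ez] g ee enz show False by simp
  qed
qed

lemma deriv: assumes ee: "mult e e = e" and enz: "e \<noteq> 0"
  and g: "Vector_Spaces.linear scale scale g" "g e = 0"
  shows "g (mult w v) = mult (g w) v + mult w (g v)"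
proof -
  obtain Q where "module_hom scale scale Q" and Q: "\<And>x y. Q (mult x y) = mult (g x) y + mult x (g y)"
    using getQ g(1) by blast
  have "Q (mult w v) = Q (mult e (mult w v))" using identL[OF ee enz] by simp
  also have "\<dots> = mult (g e) (mult w v) + mult e (g (mult w v))" using Q by blast
  also have "\<dots> = g (mult w v)" using g(2) identL[OF ee enz] by simp
  finally show ?thesis using Q by simp
qed

lemma allspan: assumes ee: "mult e e = e" and enz: "e \<noteq> 0" shows "y \<in> span {e}"
proof (rule ccontr)
  assume ny: "y \<notin> span {e}"
  then have ynz: "y \<noteq> 0" using span_zero by metis
  have key: "g (mult y y) = y + y"
    if g: "Vector_Spaces.linear scale scale g" "g e = 0" "g y = e" for g
    using deriv[OF ee enz g(1,2), of y y] g identL[OF ee enz] identR[OF ee enz] by simp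
  obtain g where g: "Vector_Spaces.linear scale scale g" "g e = 0" "g y = e"
    using extT[of y "{e}" e] ny by auto
  show False
  proof (cases "mult y y \<in> span (insert y {e})")
    case True
    then obtain k where "mult y y - k *s y \<in> span {e}" using span_breakdown_eq by blast
    then obtain c where "mult y y - k *s y = c *s e" using span_singleton by auto
    then have yy: "mult y y = k *s y + c *s e" by (metis diff_eq_eq add.commute)
    have "g (mult y y) = k *s e" using yy g module_hom.add[OF lin_mh[OF g(1)]]
      module_hom.scale[OF lin_mh[OF g(1)]] by simp
    then have "(2::'f) *s y = k *s e" using key[OF g] dbl by simp
    then have "y = (inverse 2 * k) *s e" using two
      by (metis (no_types, lifting) left_inverse scale_one scale_scale)
    then have "y \<in> range (\<lambda>k. k *s e)" by blast
    then show False using ny span_singleton by auto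
  next
    case False
    then obtain h where h: "Vector_Spaces.linear scale scale h" "\<forall>s\<in>{y,e}. h s = 0"
       "h (mult y y) = g (mult y y)"
      using extT[of "mult y y" "insert y {e}" "g (mult y y)"] by auto
    define g' where "g' = (\<lambda>x. g x - h x)"
    have g': "Vector_Spaces.linear scale scale g'" "g' e = 0" "g' y = e"
      using lin_sub[OF g(1) h(1)] g h unfolding g'_def by auto
    have "g' (mult y y) = 0" using h unfolding g'_def by simp
    then have "y + y = 0" using key[OF g'] by simp
    then show False using dbl0 ynz by blast
  qed
qed

lemma final: "is_field_alg mult \<or> (\<forall>x y. mult x y = 0)"
proof (cases "\<forall>x y. mult x y = 0")
  case True then show ?thesis by blast
next
  case False
  then obtain a where nz: "mult a a \<noteq> 0" using step1 by blast
  obtain l where l: "mult a a = l *s a" using step2a[OF nz] span_singleton by auto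
  then have lnz: "l \<noteq> 0" using nz by auto
  define e where "e = inverse l *s a"
  have ee: "mult e e = e" unfolding e_def using l lnz
    by (simp add: mL_scale mR_scale scale_scale)
  have enz: "e \<noteq> 0" unfolding e_def using lnz nz by auto
  have co: "\<exists>c. x = c *s e" for x using allspan[OF ee enz, of x] span_singleton by auto
  have pr: "mult (c *s e) (d *s e) = (c * d) *s e" for c d
    using ee by (simp add: mL_scale mR_scale scale_scale mult.commute)
  have "is_field_alg mult"
    unfolding is_field_alg_def
  proof (intro conjI allI)
    fix x y
    obtain c d where "x = c *s e" "y = d *s e" using co by meson
    then show "mult x y = mult y x" using pr by (simp add: mult.commute)
  next
    fix x y z
    obtain c d f where "x = c *s e" "y = d *s e" "z = f *s e" using co by meson
    then show "mult (mult x y) z = mult x (mult y z)" using pr by (simp add: mult.assoc)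
  next
    show "\<exists>e. e \<noteq> 0 \<and> (\<forall>x. mult e x = x) \<and> (\<forall>x. x \<noteq> 0 \<longrightarrow> (\<exists>y. mult x y = e))"
    proof -
      have "\<exists>y. mult x y = e" if "x \<noteq> 0" for x
      proof -
        obtain c where c: "x = c *s e" using co by blast
        then have "c \<noteq> 0" using \<open>x \<noteq> 0\<close> by auto
        then show "\<exists>y. mult x y = e" using c pr[of c "inverse c"] by auto
      qed
      then show ?thesis using enz identL[OF ee enz] by blast
    qed
  qed
  then show ?thesis by blast
qed

end

theorem mainTheorem13:
  fixes scale :: "'f::field \<Rightarrow> 'v::ab_group_add \<Rightarrow> 'v"
    and mult :: "'v \<Rightarrow> 'v \<Rightarrow> 'v"
  assumes "vector_space scale"
    and "\<exists>B. finite B \<and> module.span scale B = UNIV"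
    and "(2::'f) \<noteq> 0"
    and "bilinear_prod scale mult"
    and "alternative_alg mult"
    and "\<forall>f. Vector_Spaces.linear scale scale f \<longrightarrow> quasiderivation scale mult f"
  shows "is_field_alg mult \<or> (\<forall>x y. mult x y = 0)"
proof -
  interpret qalg scale mult
    using assms by (simp add: qalg_def qalg_axioms_def)
  show ?thesis by (rule final)
qed

end
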